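(* Let $c\in\mathbb{R}$, $\beta\neq-\frac{c-1}{2}$, $u(x)=|x|^\beta$, let $\Delta_1,\Delta_2,\Delta_3\in\mathcal{B}(\mathbb{R}^d)$ be pairwise disjoint with Lebesgue measure $1$, and let $f=\sum_{k=1}^3 e^{\alpha k}\mathbb{1}_{\Delta_k}$ where $\alpha\neq0$ satisfies: if $\beta>-\frac{c-1}{2}$, then $\frac{\log((\sqrt5-1)/2)}{\beta+\frac{c-1}{2}}\le\alpha\le\frac{\log((1+\sqrt5)/2)}{\beta+\frac{c-1}{2}}$; if $\beta<-\frac{c-1}{2}$, then $\frac{\log((1+\sqrt5)/2)}{\beta+\frac{c-1}{2}}\le\alpha\le\frac{\log((\sqrt5-1)/2)}{\beta+\frac{c-1}{2}}$. Then, writing $f_k=e^{\alpha k}$, for every permutation $\sigma$ of $\{1,2,3\}$ one has $\sum_{j=2}^3\left(\frac{f_{\sigma(j)}}{f_{\sigma(1)}}\right)^{\beta+\frac{c-1}{2}}\ge1$; nevertheless $\inf_{x\in\mathbb{R}}|m_{f,\pm}(x)|>0$, and hence for every $v\in L^2(\mathbb{R}^\times,|x|^cdx)$ the equation $v(x)=\int_{\mathrm{supp}(f)}\frac{u(f(s))}{|f(s)|}w(x/f(s))\,ds$ has a unique solution $w\in L^2(\mathbb{R}^\times,|x|^cdx)$.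
   Context: $\mathbb{R}^\times=\mathbb{R}\setminus\{0\}$, $\mathrm{supp}(f)=\{s:f(s)\ne0\}$, $m_{f,+}(x)=\int_{\mathrm{supp}(f)} u(f(s))|f(s)|^{(c-1)/2}e^{-ix\log|f(s)|}ds$ and $m_{f,-}(x)=\int_{\mathrm{supp}(f)} u(f(s))|f(s)|^{(c-1)/2}e^{-ix\log|f(s)|}\,\mathrm{sgn} f(s)\,ds$. *)

theory Defs
  imports "HOL-Analysis.Analysis" "HOL-Combinatorics.Permutations"
begin

definition supp_fun :: "('a \<Rightarrow> real) \<Rightarrow> 'a set" where
  "supp_fun f = {s. f s \<noteq> 0}"

definition m_plus :: "real \<Rightarrow> (real \<Rightarrow> real) \<Rightarrow> ('n::euclidean_space \<Rightarrow> real) \<Rightarrow> real \<Rightarrow> complex" where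
  "m_plus c u f x = (LINT s:supp_fun f|lborel.
      complex_of_real (u (f s) * \<bar>f s\<bar> powr ((c - 1) / 2)) * exp (- \<i> * complex_of_real (x * ln \<bar>f s\<bar>)))"

definition m_minus :: "real \<Rightarrow> (real \<Rightarrow> real) \<Rightarrow> ('n::euclidean_space \<Rightarrow> real) \<Rightarrow> real \<Rightarrow> complex" where
  "m_minus c u f x = (LINT s:supp_fun f|lborel.
      complex_of_real (u (f s) * \<bar>f s\<bar> powr ((c - 1) / 2)) * exp (- \<i> * complex_of_real (x * ln \<bar>f s\<bar>))
      * complex_of_real (sgn (f s)))"

definition L2w :: "real \<Rightarrow> (real \<Rightarrow> complex) \<Rightarrow> bool" where
  "L2w c w \<longleftrightarrow> w \<in> borel_measurable lborel \<and>
     set_integrable lborel (UNIV - {0}) (\<lambda>x. (cmod (w x))\<^sup>2 * \<bar>x\<bar> powr c)"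

definition Top :: "(real \<Rightarrow> real) \<Rightarrow> ('n::euclidean_space \<Rightarrow> real) \<Rightarrow> (real \<Rightarrow> complex) \<Rightarrow> real \<Rightarrow> complex" where
  "Top u f w x = (LINT s:supp_fun f|lborel. complex_of_real (u (f s) / \<bar>f s\<bar>) * w (x / f s))"

end

theory Submission
  imports Defs
begin

definition Nw :: "real \<Rightarrow> (real \<Rightarrow> complex) \<Rightarrow> ennreal" where
  "Nw c h = (\<integral>\<^sup>+x. ennreal ((cmod (h x))\<^sup>2 * \<bar>x\<bar> powr c) \<partial>lborel)"

lemma L2w_iff: "L2w c w \<longleftrightarrow> w \<in> borel_measurable borel \<and> Nw c w < \<infinity>"
proof -
  have eq: "(\<lambda>x. ennreal (norm (indicator (UNIV - {0}) x *\<^sub>R ((cmod (w x))\<^sup>2 * \<bar>x\<bar> powr c))))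
      = (\<lambda>x. ennreal ((cmod (w x))\<^sup>2 * \<bar>x\<bar> powr c))"
    by (auto simp: indicator_def fun_eq_iff)
  show ?thesis
    unfolding L2w_def set_integrable_def integrable_iff_bounded Nw_def eq
    by auto
qed

lemma Nw_dil:
  fixes h :: "real \<Rightarrow> complex"
  assumes [measurable]: "h \<in> borel_measurable borel" and r: "\<rho> > 0"
  shows "Nw c (\<lambda>x. complex_of_real B * h (x * \<rho>)) = ennreal (B\<^sup>2 * \<rho> powr (- c - 1)) * Nw c h"
proof -
  have "Nw c h = ennreal \<rho> * (\<integral>\<^sup>+x. ennreal ((cmod (h (0 + \<rho> * x)))\<^sup>2 * \<bar>0 + \<rho> * x\<bar> powr c) \<partial>lborel)"
    unfolding Nw_def using r by (subst nn_integral_real_affine[where c=\<rho> and t=0]) auto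
  also have "(\<lambda>x. ennreal ((cmod (h (0 + \<rho> * x)))\<^sup>2 * \<bar>0 + \<rho> * x\<bar> powr c))
      = (\<lambda>x. ennreal (\<rho> powr c) * ennreal ((cmod (h (x * \<rho>)))\<^sup>2 * \<bar>x\<bar> powr c))"
    using r by (auto simp: fun_eq_iff abs_mult powr_mult ennreal_mult'[symmetric] mult.commute mult.left_commute)
  also have "(\<integral>\<^sup>+x. ennreal (\<rho> powr c) * ennreal ((cmod (h (x * \<rho>)))\<^sup>2 * \<bar>x\<bar> powr c) \<partial>lborel)
      = ennreal (\<rho> powr c) * (\<integral>\<^sup>+x. ennreal ((cmod (h (x * \<rho>)))\<^sup>2 * \<bar>x\<bar> powr c) \<partial>lborel)"
    by (rule nn_integral_cmult) measurable
  finally have 1: "Nw c h = ennreal (\<rho> * \<rho> powr c) * (\<integral>\<^sup>+x. ennreal ((cmod (h (x * \<rho>)))\<^sup>2 * \<bar>x\<bar> powr c) \<partial>lborel)"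
    using r by (simp add: ennreal_mult mult.assoc)
  have "Nw c (\<lambda>x. complex_of_real B * h (x * \<rho>)) = (\<integral>\<^sup>+x. ennreal (B\<^sup>2) * ennreal ((cmod (h (x * \<rho>)))\<^sup>2 * \<bar>x\<bar> powr c) \<partial>lborel)"
    unfolding Nw_def by (auto simp: norm_mult power_mult_distrib ennreal_mult'[symmetric] mult.assoc intro!: nn_integral_cong)
  also have "\<dots> = ennreal (B\<^sup>2) * (\<integral>\<^sup>+x. ennreal ((cmod (h (x * \<rho>)))\<^sup>2 * \<bar>x\<bar> powr c) \<partial>lborel)"
    by (rule nn_integral_cmult) measurable
  also have "\<dots> = ennreal (B\<^sup>2 * \<rho> powr (- c - 1)) * Nw c h"
  proof -
    have "\<rho> powr (- c - 1) * (\<rho> * \<rho> powr c) = 1" using r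
      by (simp add: powr_add[symmetric] powr_mult_base)
    then have e: "B\<^sup>2 * \<rho> powr (- c - 1) * (\<rho> * \<rho> powr c) = B\<^sup>2"
      by (metis mult.assoc mult_1_right)
    have "ennreal (B\<^sup>2 * \<rho> powr (- c - 1)) * Nw c h
       = ennreal (B\<^sup>2 * \<rho> powr (- c - 1) * (\<rho> * \<rho> powr c)) * (\<integral>\<^sup>+x. ennreal ((cmod (h (x * \<rho>)))\<^sup>2 * \<bar>x\<bar> powr c) \<partial>lborel)"
      unfolding 1 using r by (simp add: ennreal_mult mult.assoc)
    then show ?thesis unfolding e by simp
  qed
  finally show ?thesis .
qed

lemma powr_pow_swap: "(\<rho>::real) > 0 \<Longrightarrow> (\<rho>^n) powr x = (\<rho> powr x)^n"
  by (smt (verit, best) powr_gt_zero powr_powr_swap powr_realpow)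

lemma CS_geom:
  fixes a :: "nat \<Rightarrow> real" assumes s: "0 < s" "s < 1"
  shows "(\<Sum>n<N. a n)\<^sup>2 \<le> (1 / (1 - s)) * (\<Sum>n<N. (a n)\<^sup>2 / s ^ n)"
proof -
  have "(\<Sum>n<N. a n)\<^sup>2 = (\<Sum>n<N. sqrt (s^n) * (a n / sqrt (s^n)))\<^sup>2"
    using s by simp
  also have "\<dots> \<le> (\<Sum>n<N. (sqrt (s^n))\<^sup>2) * (\<Sum>n<N. (a n / sqrt (s^n))\<^sup>2)"
    by (rule Cauchy_Schwarz_ineq_sum)
  also have "\<dots> = (\<Sum>n<N. s^n) * (\<Sum>n<N. (a n)\<^sup>2 / s ^ n)"
    using s by (simp add: power_divide)
  also have "\<dots> \<le> (1 / (1 - s)) * (\<Sum>n<N. (a n)\<^sup>2 / s ^ n)"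
  proof (rule mult_right_mono)
    show "(\<Sum>n<N. s^n) \<le> 1 / (1 - s)"
      using s sum_le_suminf[of "\<lambda>n. s^n" "{..<N}"] suminf_geometric[of s]
      by (simp add: summable_geometric)
    show "0 \<le> (\<Sum>n<N. (a n)\<^sup>2 / s ^ n)" using s by (simp add: sum_nonneg)
  qed
  finally show ?thesis .
qed

lemma series_sol:
  fixes v :: "real \<Rightarrow> complex"
  assumes vm[measurable]: "v \<in> borel_measurable borel" and vN: "Nw c v < \<infinity>"
    and B: "B > 0" and r: "\<rho> > 0" and lt: "B\<^sup>2 * \<rho> powr (- c - 1) < 1"
  shows "\<exists>g. g \<in> borel_measurable borel \<and> Nw c g < \<infinity> \<and>
           (AE x in lborel. g x - complex_of_real B * g (x * \<rho>) = v x)"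
proof -
  define R where "R = B\<^sup>2 * \<rho> powr (- c - 1)"
  have R0: "R > 0" "R < 1" using B r lt by (auto simp: R_def)
  define s where "s = sqrt R"
  have s0: "0 < s" "s < 1" using R0 by (auto simp: s_def)
  have sR: "s\<^sup>2 = R" using R0 by (simp add: s_def)
  define h where "h n x = complex_of_real (B^n) * v (x * \<rho>^n)" for n x
  define a where "a n x = cmod (h n x)" for n x
  have hm[measurable]: "h n \<in> borel_measurable borel" for n unfolding h_def by measurable
  have am[measurable]: "(\<lambda>x. a n x) \<in> borel_measurable borel" for n unfolding a_def by measurable
  have a0: "a n x \<ge> 0" for n x by (simp add: a_def)
  have Nh: "Nw c (h n) = ennreal (R^n) * Nw c v" for n
  proof -
    have "Nw c (h n) = ennreal ((B^n)\<^sup>2 * (\<rho>^n) powr (- c - 1)) * Nw c v"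
      unfolding h_def by (rule Nw_dil) (use r in auto)
    also have "(B^n)\<^sup>2 * (\<rho>^n) powr (- c - 1) = R^n"
    proof -
      have "(B^n)\<^sup>2 = (B\<^sup>2)^n" by (metis power_mult mult.commute)
      then show ?thesis using r by (simp add: powr_pow_swap R_def power_mult_distrib)
    qed
    finally show ?thesis .
  qed
  define T where "T x = (\<Sum>n. ennreal ((a n x)\<^sup>2 / s^n))" for x
  have Tm[measurable]: "T \<in> borel_measurable borel" unfolding T_def by measurable
  define K where "K x = T x * ennreal (\<bar>x\<bar> powr c)" for x
  have Km[measurable]: "K \<in> borel_measurable borel" unfolding K_def by measurable
  have K_eq: "K x = (\<Sum>n. ennreal (1 / s^n) * ennreal ((cmod (h n x))\<^sup>2 * \<bar>x\<bar> powr c))" for x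
    unfolding K_def T_def ennreal_suminf_multc[symmetric]
  proof (rule suminf_cong)
    fix n
    have "(a n x)\<^sup>2 / s ^ n * \<bar>x\<bar> powr c = 1 / s^n * ((cmod (h n x))\<^sup>2 * \<bar>x\<bar> powr c)"
      by (simp add: a_def)
    then show "ennreal ((a n x)\<^sup>2 / s ^ n) * ennreal (\<bar>x\<bar> powr c) =
         ennreal (1 / s ^ n) * ennreal ((cmod (h n x))\<^sup>2 * \<bar>x\<bar> powr c)"
      using s0 by (simp add: ennreal_mult[symmetric])
  qed
  have "integral\<^sup>N lborel K = (\<Sum>n. ennreal (1 / s^n) * Nw c (h n))"
    unfolding K_eq Nw_def
    by (subst nn_integral_suminf) (auto intro!: suminf_cong nn_integral_cmult)
  also have "\<dots> = (\<Sum>n. ennreal (s^n) * Nw c v)"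
  proof (rule suminf_cong)
    fix n
    have "R^n = s^n * s^n" using sR by (metis power2_eq_square power_mult_distrib)
    then have "1 / s^n * R^n = s^n" using s0 by simp
    then show "ennreal (1 / s^n) * Nw c (h n) = ennreal (s^n) * Nw c v"
      unfolding Nh using s0 R0 by (simp add: mult.assoc[symmetric] ennreal_mult[symmetric])
  qed
  also have "\<dots> = ennreal (1 / (1 - s)) * Nw c v"
    using s0 by (subst ennreal_suminf_multc) (simp add: suminf_ennreal2 summable_geometric suminf_geometric)
  finally have KI: "integral\<^sup>N lborel K = ennreal (1 / (1 - s)) * Nw c v" .
  have Km': "K \<in> borel_measurable lborel" by measurable
  have KI_fin: "integral\<^sup>N lborel K \<noteq> \<infinity>" using vN unfolding KI
    by (simp add: ennreal_mult_eq_top_iff)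
  have AE_T: "AE x in lborel. T x \<noteq> \<infinity> \<and> x \<noteq> 0"
    using nn_integral_PInf_AE[OF Km' KI_fin] AE_lborel_singleton[of 0]
  proof eventually_elim
    case (elim x)
    then show ?case unfolding K_def by (auto simp: ennreal_mult_eq_top_iff)
  qed
  have bnd: "summable (\<lambda>n. a n x) \<and> (\<Sum>n. a n x) \<le> sqrt (t / (1 - s))" if Tx: "T x = ennreal t" "t \<ge> 0" for x t
  proof -
    have pb: "(\<Sum>n<N. a n x) \<le> sqrt (t / (1 - s))" for N
    proof -
      have "ennreal (\<Sum>n<N. (a n x)\<^sup>2 / s^n) = (\<Sum>n<N. ennreal ((a n x)\<^sup>2 / s^n))"
        using s0 by (subst sum_ennreal[symmetric]) auto
      also have "\<dots> \<le> T x" unfolding T_def by (rule sum_le_suminf) auto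
      finally have "(\<Sum>n<N. (a n x)\<^sup>2 / s^n) \<le> t" using Tx by (simp add: ennreal_le_iff)
      then have "1 / (1 - s) * (\<Sum>n<N. (a n x)\<^sup>2 / s^n) \<le> 1 / (1 - s) * t"
        using s0 by (intro mult_left_mono) auto
      with CS_geom[OF s0, of "\<lambda>n. a n x" N]
      have "(\<Sum>n<N. a n x)\<^sup>2 \<le> 1 / (1 - s) * t" by (rule order_trans)
      then have "(\<Sum>n<N. a n x)\<^sup>2 \<le> t / (1 - s)" by simp
      then show ?thesis using a0 by (simp add: real_le_rsqrt sum_nonneg)
    qed
    have sm: "summable (\<lambda>n. a n x)"
      by (rule summableI_nonneg_bounded[where x="sqrt (t / (1 - s))"]) (use a0 pb in auto)
    show ?thesis using sm suminf_le_const[OF sm pb] by auto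
  qed
  define g where "g x = (if (\<Sum>n. ennreal (a n x)) < \<infinity> then (\<Sum>n. h n x) else 0)" for x
  have sum_iff: "(\<Sum>n. ennreal (a n x)) < \<infinity> \<longleftrightarrow> summable (\<lambda>n. a n x)" for x
  proof
    assume "(\<Sum>n. ennreal (a n x)) < \<infinity>"
    then show "summable (\<lambda>n. a n x)" using a0 by (intro summable_suminf_not_top) auto
  next
    assume "summable (\<lambda>n. a n x)"
    then have "(\<Sum>n. ennreal (a n x)) \<noteq> top" using a0 by (rule ennreal_suminf_neq_top)
    then show "(\<Sum>n. ennreal (a n x)) < \<infinity>" by (simp add: less_top)
  qed
  have gm: "g \<in> borel_measurable borel" unfolding g_def by measurable
  have g_bound: "ennreal ((cmod (g x))\<^sup>2 * \<bar>x\<bar> powr c) \<le> ennreal (1 / (1 - s)) * K x" for x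
  proof (cases "T x = \<infinity>")
    case True
    show ?thesis
    proof (cases "summable (\<lambda>n. a n x)")
      case False then show ?thesis unfolding g_def sum_iff by simp
    next
      case True
      show ?thesis
      proof (cases "x = 0")
        case True then show ?thesis by simp
      next
        case False
        then have "K x = \<infinity>" unfolding K_def using \<open>T x = \<infinity>\<close> by (simp add: ennreal_mult_top)
        then show ?thesis using s0 by (simp add: ennreal_mult_top)
      qed
    qed
  next
    case False
    then obtain t where t: "T x = ennreal t" "t \<ge> 0" by (cases "T x") auto
    from bnd[OF t] have sm: "summable (\<lambda>n. a n x)" and le: "(\<Sum>n. a n x) \<le> sqrt (t / (1 - s))" by auto
    have "g x = (\<Sum>n. h n x)" using sm sum_iff[of x] by (simp add: g_def)
    then have "cmod (g x) \<le> (\<Sum>n. a n x)"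
      using sm unfolding a_def by (simp add: summable_norm)
    also have "\<dots> \<le> sqrt (t / (1 - s))" by (rule le)
    finally have "(cmod (g x))\<^sup>2 \<le> (sqrt (t / (1 - s)))\<^sup>2"
      by (intro power_mono) auto
    also have "\<dots> = t / (1 - s)" using s0 t by (intro real_sqrt_pow2) simp
    finally have "(cmod (g x))\<^sup>2 \<le> t / (1 - s)" .
    then have "(cmod (g x))\<^sup>2 * \<bar>x\<bar> powr c \<le> t / (1 - s) * \<bar>x\<bar> powr c"
      by (rule mult_right_mono) simp
    then have "(cmod (g x))\<^sup>2 * \<bar>x\<bar> powr c \<le> 1 / (1 - s) * (t * \<bar>x\<bar> powr c)"
      by simp
    then show ?thesis unfolding K_def t using s0 t
      by (simp add: ennreal_mult[symmetric] mult.assoc ennreal_leI)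
  qed
  have "Nw c g \<le> (\<integral>\<^sup>+x. ennreal (1 / (1 - s)) * K x \<partial>lborel)"
    unfolding Nw_def by (rule nn_integral_mono) (rule g_bound)
  also have "\<dots> = ennreal (1 / (1 - s)) * integral\<^sup>N lborel K"
    by (rule nn_integral_cmult) (rule Km')
  also have "\<dots> < \<infinity>" using KI_fin by (simp add: ennreal_mult_less_top less_top)
  finally have gN: "Nw c g < \<infinity>" .
  have hsuc: "h (Suc n) x = complex_of_real B * h n (x * \<rho>)" for n x
    unfolding h_def by (simp add: mult.assoc mult.left_commute)
  have "AE x in lborel. g x - complex_of_real B * g (x * \<rho>) = v x"
    using AE_T
  proof eventually_elim
    case (elim x)
    then obtain t where t: "T x = ennreal t" "t \<ge> 0" by (cases "T x") auto
    from bnd[OF t] have sm: "summable (\<lambda>n. a n x)" by auto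
    have sm1: "summable (\<lambda>n. a (Suc n) x)" using sm by (subst summable_Suc_iff)
    have "a (Suc n) x / B = a n (x * \<rho>)" for n unfolding a_def hsuc using B by (simp add: norm_mult)
    moreover have "summable (\<lambda>n. a (Suc n) x / B)" using sm1 by (rule summable_divide)
    ultimately have sm2: "summable (\<lambda>n. a n (x * \<rho>))" by simp
    have gx: "g x = (\<Sum>n. h n x)" using sm sum_iff[of x] by (simp add: g_def)
    have gx2: "g (x * \<rho>) = (\<Sum>n. h n (x * \<rho>))" using sm2 sum_iff[of "x * \<rho>"] by (simp add: g_def)
    have shx: "summable (\<lambda>n. h n x)" using sm unfolding a_def by (rule summable_norm_cancel)
    have shx2: "summable (\<lambda>n. h n (x * \<rho>))" using sm2 unfolding a_def by (rule summable_norm_cancel)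
    have "(\<Sum>n. h (Suc n) x) = (\<Sum>n. h n x) - h 0 x" using shx by (rule suminf_split_head)
    moreover have "(\<Sum>n. h (Suc n) x) = complex_of_real B * (\<Sum>n. h n (x * \<rho>))"
      unfolding hsuc using shx2 by (rule suminf_mult)
    moreover have "h 0 x = v x" by (simp add: h_def)
    ultimately show ?case unfolding gx gx2 by simp
  qed
  then show ?thesis using gm gN by (intro exI[of _ g]) simp
qed

definition Tg :: "real \<Rightarrow> real \<Rightarrow> (real \<Rightarrow> complex) \<Rightarrow> real \<Rightarrow> complex" where
  "Tg b \<sigma> w x = (\<Sum>k\<in>{1,2,3::nat}. complex_of_real (b^k) * w (x * \<sigma>^k))"

lemma Tg_expand: "Tg b \<sigma> w x = complex_of_real b * w (x * \<sigma>) + complex_of_real (b^2) * w (x * \<sigma>^2)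
   + complex_of_real (b^3) * w (x * \<sigma>^3)"
  by (simp add: Tg_def)

lemma Nw_zero_iff:
  assumes [measurable]: "h \<in> borel_measurable borel"
  shows "Nw c h = 0 \<longleftrightarrow> (AE x in lborel. h x = 0)"
proof -
  have "Nw c h = 0 \<longleftrightarrow> (AE x in lborel. ennreal ((cmod (h x))\<^sup>2 * \<bar>x\<bar> powr c) = 0)"
    unfolding Nw_def by (rule nn_integral_0_iff_AE) measurable
  also have "\<dots> \<longleftrightarrow> (AE x in lborel. h x = 0)"
  proof
    assume "AE x in lborel. ennreal ((cmod (h x))\<^sup>2 * \<bar>x\<bar> powr c) = 0"
    with AE_lborel_singleton[of 0] show "AE x in lborel. h x = 0"
    proof eventually_elim
      case (elim x)
      then have "(cmod (h x))\<^sup>2 * \<bar>x\<bar> powr c \<le> 0" by (simp add: ennreal_eq_0_iff)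
      moreover have "\<bar>x\<bar> powr c > 0" using elim by simp
      ultimately have "(cmod (h x))\<^sup>2 \<le> 0" by (simp add: mult_le_0_iff)
      then show ?case by simp
    qed
  next
    assume "AE x in lborel. h x = 0"
    then show "AE x in lborel. ennreal ((cmod (h x))\<^sup>2 * \<bar>x\<bar> powr c) = 0"
      by eventually_elim simp
  qed
  finally show ?thesis .
qed

lemma Nw_cong_AE: "(AE x in lborel. h x = h' x) \<Longrightarrow> Nw c h = Nw c h'"
  unfolding Nw_def by (rule nn_integral_cong_AE) (auto elim!: eventually_mono)

lemma sq_le: "((a::real) + b)\<^sup>2 \<le> 2 * a\<^sup>2 + 2 * b\<^sup>2"
proof -
  have "0 \<le> (a - b)\<^sup>2" by simp
  then show ?thesis unfolding power2_diff power2_sum by linarith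
qed

lemma Nw_add_fin:
  assumes [measurable]: "h1 \<in> borel_measurable borel" "h2 \<in> borel_measurable borel"
    and "Nw c h1 < \<infinity>" "Nw c h2 < \<infinity>"
  shows "Nw c (\<lambda>x. h1 x + h2 x) < \<infinity>"
proof -
  have "Nw c (\<lambda>x. h1 x + h2 x) \<le> (\<integral>\<^sup>+x. 2 * ennreal ((cmod (h1 x))\<^sup>2 * \<bar>x\<bar> powr c)
       + 2 * ennreal ((cmod (h2 x))\<^sup>2 * \<bar>x\<bar> powr c) \<partial>lborel)"
    unfolding Nw_def
  proof (rule nn_integral_mono)
    fix x
    have "(cmod (h1 x + h2 x))\<^sup>2 \<le> (cmod (h1 x) + cmod (h2 x))\<^sup>2"
      by (intro power_mono norm_triangle_ineq) simp
    also have "\<dots> \<le> 2 * (cmod (h1 x))\<^sup>2 + 2 * (cmod (h2 x))\<^sup>2"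
      using sq_le by blast
    finally have "(cmod (h1 x + h2 x))\<^sup>2 * \<bar>x\<bar> powr c \<le> (2 * (cmod (h1 x))\<^sup>2 + 2 * (cmod (h2 x))\<^sup>2) * \<bar>x\<bar> powr c"
      by (rule mult_right_mono) simp
    then have "ennreal ((cmod (h1 x + h2 x))\<^sup>2 * \<bar>x\<bar> powr c) \<le> ennreal ((2 * (cmod (h1 x))\<^sup>2 + 2 * (cmod (h2 x))\<^sup>2) * \<bar>x\<bar> powr c)"
      by (rule ennreal_leI)
    also have "\<dots> = ennreal (2 * ((cmod (h1 x))\<^sup>2 * \<bar>x\<bar> powr c)) + ennreal (2 * ((cmod (h2 x))\<^sup>2 * \<bar>x\<bar> powr c))"
      by (subst ennreal_plus[symmetric]) (auto simp: algebra_simps)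
    also have "\<dots> = 2 * ennreal ((cmod (h1 x))\<^sup>2 * \<bar>x\<bar> powr c) + 2 * ennreal ((cmod (h2 x))\<^sup>2 * \<bar>x\<bar> powr c)"
      by (simp add: ennreal_mult)
    finally show "ennreal ((cmod (h1 x + h2 x))\<^sup>2 * \<bar>x\<bar> powr c) \<le> 2 * ennreal ((cmod (h1 x))\<^sup>2 * \<bar>x\<bar> powr c)
       + 2 * ennreal ((cmod (h2 x))\<^sup>2 * \<bar>x\<bar> powr c)" .
  qed
  also have "\<dots> = 2 * Nw c h1 + 2 * Nw c h2"
    unfolding Nw_def by (subst nn_integral_add) (auto simp: nn_integral_cmult)
  also have "\<dots> < \<infinity>" using assms by (simp add: ennreal_mult_less_top less_top)
  finally show ?thesis .
qed

lemma Nw_dil_fin: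
  assumes "h \<in> borel_measurable borel" "\<rho> > 0" "Nw c h < \<infinity>"
  shows "Nw c (\<lambda>x. complex_of_real B * h (x * \<rho>)) < \<infinity>"
  using assms by (simp add: Nw_dil ennreal_mult_less_top less_top)

lemma Tg_uniq:
  assumes b: "b > 0" and s: "\<sigma> > 0" and r1: "b\<^sup>2 * \<sigma> powr (- c - 1) \<noteq> 1"
    and em[measurable]: "e \<in> borel_measurable borel" and eN: "Nw c e < \<infinity>"
    and AE0: "AE x in lborel. Tg b \<sigma> e x = 0"
  shows "AE x in lborel. e x = 0"
proof -
  define r where "r = b\<^sup>2 * \<sigma> powr (- c - 1)"
  have r0: "r > 0" using b s by (simp add: r_def)
  define F where "F = Tg b \<sigma> e"
  have Fm[measurable]: "F \<in> borel_measurable borel"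
    unfolding F_def Tg_expand[abs_def] by measurable
  have "Nw c F = 0" using AE0 unfolding F_def[symmetric] by (subst Nw_zero_iff) auto
  then have "Nw c (\<lambda>x. complex_of_real b * F (x * \<sigma>)) = 0" using s by (simp add: Nw_dil)
  then have AE1: "AE x in lborel. complex_of_real b * F (x * \<sigma>) = 0"
    by (subst (asm) Nw_zero_iff) measurable
  define H where "H x = e x - complex_of_real (b^3) * e (x * \<sigma>^3)" for x
  have Hm[measurable]: "H \<in> borel_measurable borel" unfolding H_def by measurable
  have idn: "complex_of_real b * H (x * \<sigma>) = F x - complex_of_real b * F (x * \<sigma>)" for x
    by (simp add: H_def F_def Tg_expand eval_nat_numeral algebra_simps)
  have "AE x in lborel. complex_of_real b * H (x * \<sigma>) = 0"
    using AE0 AE1 unfolding F_def[symmetric] by eventually_elim (simp add: idn)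
  then have "Nw c (\<lambda>x. complex_of_real b * H (x * \<sigma>)) = 0"
    by (subst Nw_zero_iff) measurable
  then have "ennreal r * Nw c H = 0" using s by (simp add: Nw_dil r_def)
  then have "Nw c H = 0" using r0 by simp
  then have AEH: "AE x in lborel. H x = 0" by (subst (asm) Nw_zero_iff) measurable
  have "Nw c e = Nw c (\<lambda>x. complex_of_real (b^3) * e (x * \<sigma>^3))"
    by (rule Nw_cong_AE) (use AEH in \<open>auto simp: H_def elim!: eventually_mono\<close>)
  also have "\<dots> = ennreal ((b^3)\<^sup>2 * (\<sigma>^3) powr (- c - 1)) * Nw c e"
    using s by (intro Nw_dil) auto
  also have "(b^3)\<^sup>2 * (\<sigma>^3) powr (- c - 1) = r^3"
  proof -
    have "(b^3)\<^sup>2 = (b\<^sup>2)^3" by (metis power_mult mult.commute)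
    then show ?thesis using s by (simp add: powr_pow_swap r_def power_mult_distrib)
  qed
  finally have eq: "Nw c e = ennreal (r^3) * Nw c e" .
  obtain t where t: "Nw c e = ennreal t" "t \<ge> 0" using eN by (cases "Nw c e") auto
  have "ennreal t = ennreal (r^3 * t)" using eq t r0 by (simp add: ennreal_mult)
  then have "t = r^3 * t" using t r0 by (subst (asm) ennreal_inj) auto
  moreover have "r^3 \<noteq> 1"
  proof (rule notI)
    assume "r^3 = 1"
    then have "r^3 = 1^3" by simp
    then have "r = 1" using r0 by (intro power_eq_imp_eq_base[of r 3 1]) auto
    then show False using r1 unfolding r_def by simp
  qed
  ultimately have "t = 0" by (metis mult_cancel_right1)
  then have "Nw c e = 0" using t by simp
  then show ?thesis by (subst (asm) Nw_zero_iff) measurable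
qed

lemma Tg_exist:
  assumes b: "b > 0" and s: "\<sigma> > 0" and r1: "b\<^sup>2 * \<sigma> powr (- c - 1) \<noteq> 1"
    and vm[measurable]: "v \<in> borel_measurable borel" and vN: "Nw c v < \<infinity>"
  shows "\<exists>w. w \<in> borel_measurable borel \<and> Nw c w < \<infinity> \<and> (AE x in lborel. Tg b \<sigma> w x = v x)"
proof -
  define r where "r = b\<^sup>2 * \<sigma> powr (- c - 1)"
  have r0: "r > 0" using b s by (simp add: r_def)
  have "(b^3)\<^sup>2 = (b\<^sup>2)^3" by (metis power_mult mult.commute)
  then have r3: "(b^3)\<^sup>2 * (\<sigma>^3) powr (- c - 1) = r^3"
    using s by (simp add: powr_pow_swap r_def power_mult_distrib)
  show ?thesis
  proof (cases "r < 1")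
    case True
    have "(b^3)\<^sup>2 * (\<sigma>^3) powr (- c - 1) < 1" unfolding r3 using True r0
      by (simp add: power_less_one_iff)
    from series_sol[OF vm vN _ _ this] b s obtain g where
      gm[measurable]: "g \<in> borel_measurable borel" and gN: "Nw c g < \<infinity>"
      and gAE: "AE x in lborel. g x - complex_of_real (b^3) * g (x * \<sigma>^3) = v x" by auto
    define w where "w y = complex_of_real (1/b) * g (y * (1/\<sigma>)) + complex_of_real (-1) * g (y * 1)" for y
    have wm: "w \<in> borel_measurable borel" unfolding w_def by measurable
    have wN: "Nw c w < \<infinity>" unfolding w_def
      by (intro Nw_add_fin Nw_dil_fin gN) (use s in auto)
    have idn: "Tg b \<sigma> w x = g x - complex_of_real (b^3) * g (x * \<sigma>^3)" for x
      using b s by (simp add: w_def Tg_expand eval_nat_numeral field_simps)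
    show ?thesis using wm wN gAE by (intro exI[of _ w]) (simp add: idn)
  next
    case False
    then have rg: "r > 1" using r1 unfolding r_def by simp
    have e: "(1/b^3)\<^sup>2 * (1/\<sigma>^3) powr (- c - 1) = (1/r)^3"
      using r3 s b by (simp add: powr_divide power_divide)
    have "(1/b^3)\<^sup>2 * (1/\<sigma>^3) powr (- c - 1) < 1" unfolding e using rg
      by (simp add: power_less_one_iff)
    from series_sol[OF vm vN _ _ this] b s obtain g where
      gm[measurable]: "g \<in> borel_measurable borel" and gN: "Nw c g < \<infinity>"
      and gAE: "AE x in lborel. g x - complex_of_real (1/b^3) * g (x * (1/\<sigma>^3)) = v x" by auto
    define w where "w y = complex_of_real (1/b^3) * g (y * (1/\<sigma>^3)) + complex_of_real (-1/b^4) * g (y * (1/\<sigma>^4))" for y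
    have wm: "w \<in> borel_measurable borel" unfolding w_def by measurable
    have wN: "Nw c w < \<infinity>" unfolding w_def
      by (intro Nw_add_fin Nw_dil_fin gN) (use s in auto)
    have idn: "Tg b \<sigma> w x = g x - complex_of_real (1/b^3) * g (x * (1/\<sigma>^3))" for x
      using b s by (simp add: w_def Tg_expand eval_nat_numeral field_simps)
    show ?thesis using wm wN gAE by (intro exI[of _ w]) (simp add: idn)
  qed
qed

lemma m_bound:
  fixes q :: real and z :: complex
  assumes q: "q > 0" and z: "cmod z = 1"
  shows "q * \<bar>1 - q^3\<bar> / (1 + q) \<le> cmod (complex_of_real q * z + complex_of_real (q^2) * z^2 + complex_of_real (q^3) * z^3)"
proof -
  define w where "w = complex_of_real q * z"
  have nw: "cmod w = q" using q z by (simp add: w_def norm_mult)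
  have eqm: "complex_of_real q * z + complex_of_real (q^2) * z^2 + complex_of_real (q^3) * z^3 = w * (1 + w + w^2)"
    by (simp add: w_def algebra_simps eval_nat_numeral)
  have "(1 - w) * (1 + w + w^2) = 1 - w^3" by (simp add: algebra_simps eval_nat_numeral)
  then have "cmod (1 - w) * cmod (1 + w + w^2) = cmod (1 - w^3)" by (metis norm_mult)
  moreover have "\<bar>1 - q^3\<bar> \<le> cmod (1 - w^3)"
    using norm_triangle_ineq3[of 1 "w^3"] nw by (simp add: norm_power)
  moreover have "cmod (1 - w) \<le> 1 + q" using norm_triangle_ineq4[of 1 w] nw by simp
  ultimately have "\<bar>1 - q^3\<bar> \<le> (1 + q) * cmod (1 + w + w^2)"
    by (metis mult_right_mono norm_ge_zero order_trans)
  then have "\<bar>1 - q^3\<bar> / (1 + q) \<le> cmod (1 + w + w^2)" using q by (simp add: divide_le_eq mult.commute)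
  then have "q * (\<bar>1 - q^3\<bar> / (1 + q)) \<le> q * cmod (1 + w + w^2)" using q by (intro mult_left_mono) auto
  then show ?thesis unfolding eqm by (simp add: norm_mult nw)
qed

lemma perm_ineq:
  fixes A :: real and i j k :: nat
  assumes lo: "(sqrt 5 - 1) / 2 \<le> exp A" and hi: "exp A \<le> (1 + sqrt 5) / 2"
    and ijk: "i \<in> {1,2,3}" "j \<in> {1,2,3}" "k \<in> {1,2,3}" "i \<noteq> j" "i \<noteq> k" "j \<noteq> k"
  shows "exp ((real j - real i) * A) + exp ((real k - real i) * A) \<ge> 1"
proof -
  define p where "p = (sqrt 5 - 1) / 2"
  have s5: "sqrt 5 * sqrt 5 = 5" by simp
  have s51: "sqrt 5 > 1" by (simp add: real_less_rsqrt)
  have p0: "p > 0" using s51 by (simp add: p_def)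
  have pp: "p + p^2 = 1" unfolding p_def power2_eq_square using s5 by (simp add: field_simps)
  have phi: "(1 + sqrt 5) / 2 = 1 / p" unfolding p_def using s5 s51
    by (simp add: field_simps)
  define e where "e = exp A"
  have e0: "e > 0" by (simp add: e_def)
  have lo': "p \<le> e" using lo by (simp add: p_def e_def)
  have hi': "p \<le> 1 / e" using hi e0 p0 unfolding phi e_def[symmetric] by (simp add: field_simps)
  have key: "d + d^2 \<ge> 1" if "p \<le> d" for d
  proof -
    have "p^2 \<le> d^2" using that p0 by (intro power_mono) auto
    then show ?thesis using pp that by linarith
  qed
  have E0: "exp A = e" by (simp add: e_def)
  have Ea: "exp (-A) = 1/e" by (simp add: e_def exp_minus field_simps)
  have E1: "exp (1 * A) = e" by (simp add: e_def)
  have E2: "exp (2 * A) = e^2" by (simp add: e_def exp_double)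
  have Em1: "exp ((-1) * A) = 1 / e" using Ea by simp
  have "exp ((-2) * A) = exp (-A)^2" by (subst exp_double[symmetric]) simp
  then have Em2: "exp ((-2) * A) = (1/e)^2" using Ea by simp
  have Eb: "exp (-(2*A)) = (1/e)^2" using Em2 by simp
  consider "i = 1" "j = 2" "k = 3" | "i = 1" "j = 3" "k = 2" | "i = 2" "j = 1" "k = 3"
    | "i = 2" "j = 3" "k = 1" | "i = 3" "j = 1" "k = 2" | "i = 3" "j = 2" "k = 1"
    using ijk by auto
  then show ?thesis
  proof cases
    case 1 then show ?thesis using key[OF lo'] by (simp add: E1 E2 E0 Ea Eb)
  next
    case 2 then show ?thesis using key[OF lo'] by (simp add: E1 E2 E0 Ea Eb)
  next
    case 3
    have "1 \<le> e \<or> 1 \<le> 1 / e" using e0 by (cases "e \<ge> 1") (auto simp: field_simps)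
    then show ?thesis using 3 e0 by (auto simp: E1 Em1 E0 Ea Eb add_increasing add_increasing2)
  next
    case 4
    have "1 \<le> e \<or> 1 \<le> 1 / e" using e0 by (cases "e \<ge> 1") (auto simp: field_simps)
    then show ?thesis using 4 e0 by (auto simp: E1 Em1 E0 Ea Eb add_increasing add_increasing2)
  next
    case 5 then show ?thesis using key[OF hi'] by (simp add: Em1 Em2 E0 Ea Eb)
  next
    case 6 then show ?thesis using key[OF hi'] by (simp add: Em1 Em2 E0 Ea Eb)
  qed
qed

theorem mainTheorem4:
  fixes c \<beta> \<alpha> :: real
    and u :: "real \<Rightarrow> real"
    and \<Delta> :: "nat \<Rightarrow> 'n::euclidean_space set"
    and f :: "'n \<Rightarrow> real"
  assumes beta_ne: "\<beta> \<noteq> - (c - 1) / 2"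
    and u_def: "u = (\<lambda>x. \<bar>x\<bar> powr \<beta>)"
    and Delta_borel: "\<And>k. k \<in> {1,2,3} \<Longrightarrow> \<Delta> k \<in> sets borel"
    and Delta_meas: "\<And>k. k \<in> {1,2,3} \<Longrightarrow> emeasure lborel (\<Delta> k) = 1"
    and Delta_disj: "disjoint_family_on \<Delta> {1,2,3}"
    and f_def: "f = (\<lambda>s. \<Sum>k\<in>{1,2,3::nat}. exp (\<alpha> * real k) * indicator (\<Delta> k) s)"
    and alpha_ne: "\<alpha> \<noteq> 0"
    and alpha_pos: "\<beta> + (c - 1) / 2 > 0 \<Longrightarrow>
        ln ((sqrt 5 - 1) / 2) / (\<beta> + (c - 1) / 2) \<le> \<alpha> \<and>
        \<alpha> \<le> ln ((1 + sqrt 5) / 2) / (\<beta> + (c - 1) / 2)"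
    and alpha_neg: "\<beta> + (c - 1) / 2 < 0 \<Longrightarrow>
        ln ((1 + sqrt 5) / 2) / (\<beta> + (c - 1) / 2) \<le> \<alpha> \<and>
        \<alpha> \<le> ln ((sqrt 5 - 1) / 2) / (\<beta> + (c - 1) / 2)"
  shows "(\<forall>\<sigma>. \<sigma> permutes {1,2,3::nat} \<longrightarrow>
            (\<Sum>j\<in>{2,3}. (exp (\<alpha> * real (\<sigma> j)) / exp (\<alpha> * real (\<sigma> 1))) powr (\<beta> + (c - 1) / 2)) \<ge> 1)
       \<and> (INF x. cmod (m_plus c u f x)) > 0
       \<and> (INF x. cmod (m_minus c u f x)) > 0
       \<and> (\<forall>v. L2w c v \<longrightarrow>
            (\<exists>w. L2w c w \<and> (AE x in lborel. x \<noteq> 0 \<longrightarrow> v x = Top u f w x)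
               \<and> (\<forall>w'. L2w c w' \<and> (AE x in lborel. x \<noteq> 0 \<longrightarrow> v x = Top u f w' x)
                      \<longrightarrow> (AE x in lborel. x \<noteq> 0 \<longrightarrow> w' x = w x))))"
proof -
  define \<gamma> where "\<gamma> = \<beta> + (c - 1) / 2"
  have g0: "\<gamma> \<noteq> 0" using beta_ne by (simp add: \<gamma>_def field_simps)
  define A where "A = \<alpha> * \<gamma>"
  have A0: "A \<noteq> 0" using g0 alpha_ne by (simp add: A_def)
  have s51: "sqrt 5 > 1" by (simp add: real_less_rsqrt)
  have pos1: "(sqrt 5 - 1) / 2 > 0" using s51 by simp
  have bounds: "ln ((sqrt 5 - 1) / 2) \<le> A \<and> A \<le> ln ((1 + sqrt 5) / 2)"
  proof (cases "\<gamma> > 0")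
    case True
    with alpha_pos show ?thesis unfolding \<gamma>_def[symmetric] A_def
      by (simp add: pos_divide_le_eq pos_le_divide_eq)
  next
    case False
    then have "\<gamma> < 0" using g0 by simp
    with alpha_neg show ?thesis unfolding \<gamma>_def[symmetric] A_def
      by (simp add: neg_divide_le_eq neg_le_divide_eq)
  qed
  have lo: "(sqrt 5 - 1) / 2 \<le> exp A"
    using bounds pos1 by (metis exp_le_cancel_iff exp_ln)
  have hi: "exp A \<le> (1 + sqrt 5) / 2"
  proof -
    have "(1 + sqrt 5) / 2 > 0" using s51 by (simp; linarith)
    then show ?thesis using bounds by (metis exp_le_cancel_iff exp_ln)
  qed
  have part1: "\<forall>\<sigma>. \<sigma> permutes {1,2,3::nat} \<longrightarrow>
            (\<Sum>j\<in>{2,3}. (exp (\<alpha> * real (\<sigma> j)) / exp (\<alpha> * real (\<sigma> 1))) powr (\<beta> + (c - 1) / 2)) \<ge> 1"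
  proof (intro allI impI)
    fix \<sigma> assume p: "\<sigma> permutes {1,2,3::nat}"
    have inS: "\<sigma> i \<in> {1,2,3}" if "i \<in> {1,2,3}" for i using permutes_in_image[OF p] that by blast
    have inj: "inj \<sigma>" using permutes_inj[OF p] .
    have tj: "(exp (\<alpha> * real (\<sigma> j)) / exp (\<alpha> * real (\<sigma> 1))) powr (\<beta> + (c - 1) / 2)
        = exp ((real (\<sigma> j) - real (\<sigma> 1)) * A)" for j
    proof -
      have "(exp (\<alpha> * real (\<sigma> j)) / exp (\<alpha> * real (\<sigma> 1))) powr (\<beta> + (c - 1) / 2)
          = exp ((\<alpha> * real (\<sigma> j) - \<alpha> * real (\<sigma> 1)) * \<gamma>)"
        by (simp add: exp_diff[symmetric] powr_def \<gamma>_def mult.commute)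
      also have "(\<alpha> * real (\<sigma> j) - \<alpha> * real (\<sigma> 1)) * \<gamma> = (real (\<sigma> j) - real (\<sigma> 1)) * A"
        unfolding A_def by (simp add: algebra_simps)
      finally show ?thesis .
    qed
    have "exp ((real (\<sigma> 2) - real (\<sigma> 1)) * A) + exp ((real (\<sigma> 3) - real (\<sigma> 1)) * A) \<ge> 1"
      by (rule perm_ineq[OF lo hi]) (use inS inj in \<open>simp_all add: inj_eq\<close>)
    then show "(\<Sum>j\<in>{2,3}. (exp (\<alpha> * real (\<sigma> j)) / exp (\<alpha> * real (\<sigma> 1))) powr (\<beta> + (c - 1) / 2)) \<ge> 1"
      using tj[of 2] tj[of 3] by simp
  qed
  have disj: "\<Delta> 1 \<inter> \<Delta> 2 = {}" "\<Delta> 1 \<inter> \<Delta> 3 = {}" "\<Delta> 2 \<inter> \<Delta> 3 = {}"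
    using Delta_disj unfolding disjoint_family_on_def by auto
  have fv: "f s = (if s \<in> \<Delta> 1 then exp (\<alpha> * real (1::nat)) else if s \<in> \<Delta> 2 then exp (\<alpha> * real (2::nat))
      else if s \<in> \<Delta> 3 then exp (\<alpha> * real (3::nat)) else 0)" for s
    using disj unfolding f_def by (auto simp: indicator_def)
  have ind: "indicator (supp_fun f) s *\<^sub>R F (f s) =
      (\<Sum>k\<in>{1,2,3::nat}. indicator (\<Delta> k) s *\<^sub>R F (exp (\<alpha> * real k)))" for s and F :: "real \<Rightarrow> complex"
    using disj unfolding supp_fun_def by (auto simp: fv indicator_def)
  have intk: "integrable lborel (\<lambda>s. indicator (\<Delta> k) s *\<^sub>R C)" if k: "k \<in> {1,2,3}" for k and C :: complex
    using Delta_borel[OF k] Delta_meas[OF k] by (intro integrable_scaleR_left integrable_real_indicator) auto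
  have int: "(LINT s:supp_fun f|lborel. F (f s)) = (\<Sum>k\<in>{1,2,3::nat}. F (exp (\<alpha> * real k)))"
    for F :: "real \<Rightarrow> complex"
  proof -
    have "(LINT s:supp_fun f|lborel. F (f s)) = (LINT s|lborel. (\<Sum>k\<in>{1,2,3::nat}. indicator (\<Delta> k) s *\<^sub>R F (exp (\<alpha> * real k))))"
      unfolding set_lebesgue_integral_def ind ..
    also have "\<dots> = (\<Sum>k\<in>{1,2,3::nat}. LINT s|lborel. indicator (\<Delta> k) s *\<^sub>R F (exp (\<alpha> * real k)))"
      by (subst Bochner_Integration.integral_sum) (auto intro: intk)
    also have "\<dots> = (\<Sum>k\<in>{1,2,3::nat}. F (exp (\<alpha> * real k)))"
    proof (rule sum.cong)
      fix k :: nat assume k: "k \<in> {1,2,3}"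
      have "measure lborel (\<Delta> k) = 1" using Delta_meas[OF k] by (simp add: measure_def)
      then show "(LINT s|lborel. indicator (\<Delta> k) s *\<^sub>R F (exp (\<alpha> * real k))) = F (exp (\<alpha> * real k))"
        using Delta_borel[OF k] Delta_meas[OF k] by (subst integral_scaleR_left) auto
    qed simp
    finally show ?thesis .
  qed
  have part2: "(INF x. cmod (m_plus c u f x)) > 0 \<and> (INF x. cmod (m_minus c u f x)) > 0"
  proof -
    define q where "q = exp A"
    have q0: "q > 0" by (simp add: q_def)
    have q1: "q \<noteq> 1" using A0 by (simp add: q_def)
    define z where "z x = exp (- \<i> * complex_of_real (x * \<alpha>))" for x
    have nz: "cmod (z x) = 1" for x by (simp add: z_def norm_exp_eq_Re)
    have e1: "u (exp t) * \<bar>exp t\<bar> powr ((c - 1) / 2) = exp (t * \<gamma>)" for t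
      by (simp add: u_def powr_def exp_add[symmetric] \<gamma>_def algebra_simps)
    have e2: "exp (\<alpha> * real k * \<gamma>) = q^k" for k :: nat
    proof -
      have "\<alpha> * real k * \<gamma> = of_nat k * A" by (simp add: A_def)
      then have "exp (\<alpha> * real k * \<gamma>) = exp (of_nat k * A)" by (simp only:)
      then show ?thesis by (simp only: q_def exp_of_nat_mult)
    qed
    have e3: "exp (- \<i> * complex_of_real (x * ln \<bar>exp (\<alpha> * real k)\<bar>)) = (z x)^k" for k :: nat and x
    proof -
      have "- \<i> * complex_of_real (x * ln \<bar>exp (\<alpha> * real k)\<bar>) = of_nat k * (- \<i> * complex_of_real (x * \<alpha>))"
        by simp
      then show ?thesis by (simp only: z_def exp_of_nat_mult)
    qed
    have tm: "complex_of_real (u (exp (\<alpha> * real k)) * \<bar>exp (\<alpha> * real k)\<bar> powr ((c - 1) / 2))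
        * exp (- \<i> * complex_of_real (x * ln \<bar>exp (\<alpha> * real k)\<bar>)) = complex_of_real (q^k) * (z x)^k"
      for k :: nat and x
      unfolding e3 e1 e2 ..
    have mp: "m_plus c u f x = complex_of_real q * z x + complex_of_real (q^2) * (z x)^2 + complex_of_real (q^3) * (z x)^3" for x
    proof -
      have "m_plus c u f x = (\<Sum>k\<in>{1,2,3::nat}. complex_of_real (u (exp (\<alpha> * real k)) * \<bar>exp (\<alpha> * real k)\<bar> powr ((c - 1) / 2))
        * exp (- \<i> * complex_of_real (x * ln \<bar>exp (\<alpha> * real k)\<bar>)))"
        unfolding m_plus_def by (rule int)
      also have "\<dots> = (\<Sum>k\<in>{1,2,3::nat}. complex_of_real (q^k) * (z x)^k)" by (simp only: tm)
      finally show ?thesis by simp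
    qed
    have mm: "m_minus c u f x = m_plus c u f x" for x
    proof -
      have "m_minus c u f x = (\<Sum>k\<in>{1,2,3::nat}. complex_of_real (u (exp (\<alpha> * real k)) * \<bar>exp (\<alpha> * real k)\<bar> powr ((c - 1) / 2))
        * exp (- \<i> * complex_of_real (x * ln \<bar>exp (\<alpha> * real k)\<bar>)) * complex_of_real (sgn (exp (\<alpha> * real k))))"
        unfolding m_minus_def by (rule int)
      also have "\<dots> = (\<Sum>k\<in>{1,2,3::nat}. complex_of_real (u (exp (\<alpha> * real k)) * \<bar>exp (\<alpha> * real k)\<bar> powr ((c - 1) / 2))
        * exp (- \<i> * complex_of_real (x * ln \<bar>exp (\<alpha> * real k)\<bar>)))"
        by simp
      also have "\<dots> = m_plus c u f x" unfolding m_plus_def by (rule int[symmetric])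
      finally show ?thesis .
    qed
    define \<delta> where "\<delta> = q * \<bar>1 - q^3\<bar> / (1 + q)"
    have d0: "\<delta> > 0"
    proof -
      have "q^3 \<noteq> 1"
      proof
        assume "q^3 = 1"
        then have "q^3 = 1^3" by simp
        then have "q = 1" using q0 by (intro power_eq_imp_eq_base[of q 3 1]) auto
        then show False using q1 by simp
      qed
      then show ?thesis using q0 by (simp add: \<delta>_def)
    qed
    have lb: "\<delta> \<le> cmod (m_plus c u f x)" for x
      unfolding mp \<delta>_def by (rule m_bound[OF q0 nz])
    have "\<delta> \<le> (INF x. cmod (m_plus c u f x))" by (rule cINF_greatest) (use lb in auto)
    then show ?thesis using d0 by (simp add: mm)
  qed
  have part3: "\<forall>v. L2w c v \<longrightarrow>
            (\<exists>w. L2w c w \<and> (AE x in lborel. x \<noteq> 0 \<longrightarrow> v x = Top u f w x)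
               \<and> (\<forall>w'. L2w c w' \<and> (AE x in lborel. x \<noteq> 0 \<longrightarrow> v x = Top u f w' x)
                      \<longrightarrow> (AE x in lborel. x \<noteq> 0 \<longrightarrow> w' x = w x)))"
  proof -
    define b where "b = exp ((\<beta> - 1) * \<alpha>)"
    define \<sigma> where "\<sigma> = exp (- \<alpha>)"
    have b0: "b > 0" and s0: "\<sigma> > 0" by (simp_all add: b_def \<sigma>_def)
    have tb: "u (exp t) / \<bar>exp t\<bar> = exp (t * (\<beta> - 1))" for t
      by (simp add: u_def powr_def exp_diff[symmetric] algebra_simps)
    have bk: "exp (\<alpha> * real k * (\<beta> - 1)) = b^k" for k :: nat
    proof -
      have "exp (\<alpha> * real k * (\<beta> - 1)) = exp (of_nat k * ((\<beta> - 1) * \<alpha>))" by (simp add: algebra_simps)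
      then show ?thesis by (simp only: b_def exp_of_nat_mult)
    qed
    have sk: "x / exp (\<alpha> * real k) = x * \<sigma>^k" for k :: nat and x
    proof -
      have "\<sigma>^k = exp (of_nat k * (- \<alpha>))" by (simp only: \<sigma>_def exp_of_nat_mult)
      also have "\<dots> = 1 / exp (\<alpha> * real k)" by (simp add: exp_minus field_simps)
      finally show ?thesis by simp
    qed
    have TopTg: "Top u f w x = Tg b \<sigma> w x" for w x
    proof -
      have "Top u f w x = (\<Sum>k\<in>{1,2,3::nat}. complex_of_real (u (exp (\<alpha> * real k)) / \<bar>exp (\<alpha> * real k)\<bar>) * w (x / exp (\<alpha> * real k)))"
        unfolding Top_def by (rule int)
      also have "\<dots> = Tg b \<sigma> w x" unfolding Tg_def tb bk sk ..
      finally show ?thesis .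
    qed
    have r1: "b\<^sup>2 * \<sigma> powr (- c - 1) \<noteq> 1"
    proof -
      have "b\<^sup>2 = exp (2 * ((\<beta> - 1) * \<alpha>))" by (simp add: b_def exp_double)
      moreover have "\<sigma> powr (- c - 1) = exp ((- c - 1) * (- \<alpha>))" by (simp add: \<sigma>_def powr_def)
      ultimately have "b\<^sup>2 * \<sigma> powr (- c - 1) = exp (2 * ((\<beta> - 1) * \<alpha>) + (- c - 1) * (- \<alpha>))"
        by (simp only: exp_add)
      also have "2 * ((\<beta> - 1) * \<alpha>) + (- c - 1) * (- \<alpha>) = 2 * A"
        by (simp add: A_def \<gamma>_def field_simps)
      finally show ?thesis using A0 by simp
    qed
    show ?thesis
    proof (intro allI impI)
      fix v assume "L2w c v"
      then have vm: "v \<in> borel_measurable borel" and vN: "Nw c v < \<infinity>" by (auto simp: L2w_iff)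
      obtain w where wm[measurable]: "w \<in> borel_measurable borel" and wN: "Nw c w < \<infinity>"
        and wAE: "AE x in lborel. Tg b \<sigma> w x = v x"
        using Tg_exist[OF b0 s0 r1 vm vN] by blast
      have "L2w c w" using wm wN by (simp add: L2w_iff)
      moreover have "AE x in lborel. x \<noteq> 0 \<longrightarrow> v x = Top u f w x"
        using wAE by eventually_elim (simp add: TopTg)
      moreover have "AE x in lborel. x \<noteq> 0 \<longrightarrow> w' x = w x"
        if w': "L2w c w'" "AE x in lborel. x \<noteq> 0 \<longrightarrow> v x = Top u f w' x" for w'
      proof -
        have w'm[measurable]: "w' \<in> borel_measurable borel" and w'N: "Nw c w' < \<infinity>"
          using w' by (auto simp: L2w_iff)
        define e where "e x = w' x + complex_of_real (-1) * w (x * 1)" for x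
        have em: "e \<in> borel_measurable borel" unfolding e_def by measurable
        have eN: "Nw c e < \<infinity>" unfolding e_def
          by (intro Nw_add_fin Nw_dil_fin wN w'N) auto
        have eT: "Tg b \<sigma> e x = Tg b \<sigma> w' x - Tg b \<sigma> w x" for x
          by (simp add: e_def Tg_expand algebra_simps)
        have "AE x in lborel. Tg b \<sigma> e x = 0"
          using wAE w'(2) AE_lborel_singleton[of 0]
          by eventually_elim (simp add: eT TopTg)
        from Tg_uniq[OF b0 s0 r1 em eN this]
        show ?thesis by eventually_elim (simp add: e_def)
      qed
      ultimately show "\<exists>w. L2w c w \<and> (AE x in lborel. x \<noteq> 0 \<longrightarrow> v x = Top u f w x)
               \<and> (\<forall>w'. L2w c w' \<and> (AE x in lborel. x \<noteq> 0 \<longrightarrow> v x = Top u f w' x)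
                      \<longrightarrow> (AE x in lborel. x \<noteq> 0 \<longrightarrow> w' x = w x))" by blast
    qed
  qed
  show ?thesis using part1 part2 part3 by blast
qed

end
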